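(* Let $A$ be a real symmetric $r$-matrix of order $n$. If $\eta^{(p)}(A)=n^{-r/p}|\Sigma A|$ for some $p>1$, then $A$ is regular.
   Context: A cubical $r$-matrix of order $n$ is a function $A$ on $[n]^r$ with entries $a_{i_1,\ldots,i_r}$; symmetric means invariant under permutations of indices. $\Sigma B$ denotes the sum of all entries of a matrix $B$. $P_A(\mathbf{x})=\sum a_{i_1,\ldots,i_r}x_{i_1}\cdots x_{i_r}$ and $\eta^{(p)}(A)=\max\{|P_A(\mathbf{x})|:\mathbf{x}\in\mathbb{R}^n,|\mathbf{x}|_p=1\}$. For $k\in[r]$, $s\in[n]$, the slice $A^{(k)}_s$ is the $(r-1)$-matrix obtained by fixing $i_k=s$. $A$ is regular if for every $k\in[r]$, $\Sigma A^{(k)}_1=\cdots=\Sigma A^{(k)}_n$. *)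

theory Defs
  imports Complex_Main "HOL-Combinatorics.Permutations"
begin

text \<open>A cubical r-matrix of order n is a real-valued function on index tuples
  i : {0..<r} -> {0..<n} (0-based indices), represented extensionally as elements of
  PiE {..<r} (\<lambda>_. {..<n}). Values of A outside this index set are irrelevant.\<close>

definition idx :: "nat \<Rightarrow> nat \<Rightarrow> (nat \<Rightarrow> nat) set" where
  "idx r n = PiE {..<r} (\<lambda>_. {..<n})"

definition msum :: "nat \<Rightarrow> nat \<Rightarrow> ((nat \<Rightarrow> nat) \<Rightarrow> real) \<Rightarrow> real" where
  "msum r n A = (\<Sum>i\<in>idx r n. A i)"

definition symmetric_matrix :: "nat \<Rightarrow> nat \<Rightarrow> ((nat \<Rightarrow> nat) \<Rightarrow> real) \<Rightarrow> bool" where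
  "symmetric_matrix r n A \<longleftrightarrow>
     (\<forall>i\<in>idx r n. \<forall>\<sigma>. \<sigma> permutes {..<r} \<longrightarrow> A (i \<circ> \<sigma>) = A i)"

definition polyA :: "nat \<Rightarrow> nat \<Rightarrow> ((nat \<Rightarrow> nat) \<Rightarrow> real) \<Rightarrow> (nat \<Rightarrow> real) \<Rightarrow> real" where
  "polyA r n A x = (\<Sum>i\<in>idx r n. A i * (\<Prod>k<r. x (i k)))"

definition pnorm :: "real \<Rightarrow> nat \<Rightarrow> (nat \<Rightarrow> real) \<Rightarrow> real" where
  "pnorm p n x = (\<Sum>j<n. \<bar>x j\<bar> powr p) powr (1 / p)"

text \<open>eta^(p)(A); the maximum exists by compactness, so it equals this supremum.\<close>
definition eta :: "real \<Rightarrow> nat \<Rightarrow> nat \<Rightarrow> ((nat \<Rightarrow> nat) \<Rightarrow> real) \<Rightarrow> real" where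
  "eta p r n A = Sup {\<bar>polyA r n A x\<bar> | x. pnorm p n x = 1}"

definition slice_sum :: "nat \<Rightarrow> nat \<Rightarrow> ((nat \<Rightarrow> nat) \<Rightarrow> real) \<Rightarrow> nat \<Rightarrow> nat \<Rightarrow> real" where
  "slice_sum r n A k s = (\<Sum>i\<in>{i\<in>idx r n. i k = s}. A i)"

definition regular_matrix :: "nat \<Rightarrow> nat \<Rightarrow> ((nat \<Rightarrow> nat) \<Rightarrow> real) \<Rightarrow> bool" where
  "regular_matrix r n A \<longleftrightarrow>
     (\<forall>k<r. \<forall>s<n. \<forall>t<n. slice_sum r n A k s = slice_sum r n A k t)"

end

theory Submission
  imports Defs
begin

lemma finite_idx: "finite (idx r n)"
  by (simp add: idx_def finite_PiE)

lemma slice_sym: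
  assumes sym: "symmetric_matrix r n A" and k: "k < r"
  shows "slice_sum r n A k s = slice_sum r n A 0 s"
proof -
  let ?\<sigma> = "transpose 0 k"
  have perm: "?\<sigma> permutes {..<r}" using k by (intro permutes_swap_id) auto
  have mem: "i \<circ> ?\<sigma> \<in> idx r n" if "i \<in> idx r n" for i
  proof -
    have "\<forall>x\<in>{..<r}. (i \<circ> ?\<sigma>) x \<in> {..<n}"
    proof
      fix x assume "x \<in> {..<r}"
      then have "?\<sigma> x \<in> {..<r}" using perm by (metis permutes_in_image)
      then show "(i \<circ> ?\<sigma>) x \<in> {..<n}" using that unfolding idx_def by (auto simp: PiE_iff)
    qed
    moreover have "(i \<circ> ?\<sigma>) x = undefined" if "x \<notin> {..<r}" for x
    proof -
      have "?\<sigma> x = x" using perm that by (simp add: permutes_not_in)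
      then show ?thesis using \<open>i \<in> idx r n\<close> that unfolding idx_def
        by (auto simp: PiE_iff extensional_def)
    qed
    ultimately show ?thesis unfolding idx_def by (auto simp: PiE_iff extensional_def)
  qed
  have inv: "(i \<circ> ?\<sigma>) \<circ> ?\<sigma> = i" for i :: "nat \<Rightarrow> nat"
    by (auto simp: fun_eq_iff)
  show ?thesis
    unfolding slice_sum_def
  proof (rule sum.reindex_bij_witness[where i="\<lambda>i. i \<circ> ?\<sigma>" and j="\<lambda>i. i \<circ> ?\<sigma>"])
    fix a assume "a \<in> {i \<in> idx r n. i 0 = s}"
    then show "a \<circ> ?\<sigma> \<circ> ?\<sigma> = a" "a \<circ> ?\<sigma> \<in> {i \<in> idx r n. i k = s}"
      using mem inv by auto
  next
    fix b assume b: "b \<in> {i \<in> idx r n. i k = s}"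
    then show "b \<circ> ?\<sigma> \<circ> ?\<sigma> = b" "b \<circ> ?\<sigma> \<in> {i \<in> idx r n. i 0 = s}"
      using mem inv by auto
    show "A (b \<circ> ?\<sigma>) = A b" using sym perm b unfolding symmetric_matrix_def by auto
  qed
qed

lemma pnorm_scale:
  assumes "c > 0" "p > 0"
  shows "pnorm p n (\<lambda>j. c * x j) = c * pnorm p n x"
proof -
  have "(\<Sum>j<n. \<bar>c * x j\<bar> powr p) = c powr p * (\<Sum>j<n. \<bar>x j\<bar> powr p)"
    using assms by (simp add: abs_mult powr_mult sum_distrib_left)
  then show ?thesis using assms unfolding pnorm_def
    by (simp add: powr_mult powr_powr)
qed

lemma polyA_scale: "polyA r n A (\<lambda>j. c * x j) = c ^ r * polyA r n A x"
  unfolding polyA_def by (simp add: prod.distrib sum_distrib_left mult_ac)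

lemma poly_bound1:
  assumes "pnorm p n x = 1" "p > 0"
  shows "\<bar>polyA r n A x\<bar> \<le> (\<Sum>i\<in>idx r n. \<bar>A i\<bar>)"
proof -
  have xb: "\<bar>x j\<bar> \<le> 1" if "j < n" for j
  proof (rule ccontr)
    assume "\<not> \<bar>x j\<bar> \<le> 1"
    then have "\<bar>x j\<bar> powr p > 1" using assms(2) by (simp add: gr_one_powr)
    moreover have "\<bar>x j\<bar> powr p \<le> (\<Sum>j<n. \<bar>x j\<bar> powr p)"
      using that by (intro member_le_sum) auto
    ultimately have "(\<Sum>j<n. \<bar>x j\<bar> powr p) > 1" by linarith
    then have "(\<Sum>j<n. \<bar>x j\<bar> powr p) powr (1/p) > 1" using assms(2)
      by (simp add: gr_one_powr)
    then show False using assms(1) unfolding pnorm_def by simp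
  qed
  have "\<bar>polyA r n A x\<bar> \<le> (\<Sum>i\<in>idx r n. \<bar>A i * (\<Prod>k<r. x (i k))\<bar>)"
    unfolding polyA_def by (rule sum_abs)
  also have "\<dots> \<le> (\<Sum>i\<in>idx r n. \<bar>A i\<bar>)"
  proof (rule sum_mono)
    fix i assume i: "i \<in> idx r n"
    have "\<bar>\<Prod>k<r. x (i k)\<bar> \<le> 1"
      unfolding abs_prod
      by (rule prod_le_1) (use i xb in \<open>auto simp: idx_def PiE_iff\<close>)
    then show "\<bar>A i * (\<Prod>k<r. x (i k))\<bar> \<le> \<bar>A i\<bar>"
      by (simp add: abs_mult mult_left_le)
  qed
  finally show ?thesis .
qed

lemma poly_bound:
  assumes "p > 0" "pnorm p n x > 0"
  shows "\<bar>polyA r n A x\<bar> \<le> eta p r n A * pnorm p n x ^ r"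
proof -
  define N where "N = pnorm p n x"
  define x' where "x' = (\<lambda>j. (1/N) * x j)"
  have N: "N > 0" using assms N_def by simp
  have n1: "pnorm p n x' = 1" unfolding x'_def using N assms
    using pnorm_scale[of "1/N" p n x] by (simp add: N_def)
  have bdd: "bdd_above {\<bar>polyA r n A x\<bar> | x. pnorm p n x = 1}"
    using poly_bound1[OF _ assms(1)] by (auto intro!: bdd_aboveI)
  have "\<bar>polyA r n A x'\<bar> \<le> eta p r n A"
    unfolding eta_def using n1 by (intro cSup_upper[OF _ bdd]) auto
  moreover have "x = (\<lambda>j. N * x' j)" using N by (simp add: x'_def)
  then have "polyA r n A x = N ^ r * polyA r n A x'"
    by (metis polyA_scale)
  ultimately show ?thesis using N
    by (simp add: N_def abs_mult mult.commute mult_left_mono)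
qed


lemma slice_ind: "slice_sum r n A k s = (\<Sum>i\<in>idx r n. A i * (if i k = s then 1 else 0))"
  unfolding slice_sum_def by (simp add: sum.inter_filter[OF finite_idx] if_distrib cong: if_cong)

theorem proposition18:
  fixes r n :: nat and A :: "(nat \<Rightarrow> nat) \<Rightarrow> real" and p :: real
  assumes "symmetric_matrix r n A"
    and "p > 1"
    and "eta p r n A = real n powr (- real r / p) * \<bar>msum r n A\<bar>"
  shows "regular_matrix r n A"
proof -
  have p0: "p > 0" using assms(2) by simp
  have main: "slice_sum r n A 0 s = slice_sum r n A 0 t"
    if r0: "0 < r" and s: "s < n" and t: "t < n" and st: "s \<noteq> t" for s t
  proof -
    have n0: "n > 0" using s by simp
    define d where "d = (\<lambda>j::nat. (if j = s then 1 else 0) - (if j = t then 1 else 0) :: real)"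
    define Q where "Q = (\<lambda>e. \<Sum>i\<in>idx r n. A i * (\<Prod>k<r. 1 + e * d (i k)))"
    define N where "N = (\<lambda>e. \<Sum>j<n. (1 + e * d j) powr p)"
    define c where "c = - (real r / p)"
    define h where "h = (\<lambda>e. Q e * N e powr c)"
    define Q' where "Q' = (\<Sum>i\<in>idx r n. A i * (\<Sum>k<r. d (i k)))"
    have dQ: "(Q has_real_derivative Q') (at 0)"
      unfolding Q_def Q'_def
    proof (rule DERIV_sum)
      fix i assume "i \<in> idx r n"
      have "((\<lambda>e. \<Prod>k<r. 1 + e * d (i k)) has_real_derivative
               (\<Sum>k<r. d (i k) * (\<Prod>l\<in>{..<r}-{k}. 1 + 0 * d (i l)))) (at 0)"
        by (rule has_field_derivative_prod) (auto intro!: derivative_eq_intros)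
      then have "((\<lambda>e. \<Prod>k<r. 1 + e * d (i k)) has_real_derivative (\<Sum>k<r. d (i k))) (at 0)"
        by simp
      then show "((\<lambda>e. A i * (\<Prod>k<r. 1 + e * d (i k))) has_real_derivative
                   A i * (\<Sum>k<r. d (i k))) (at 0)"
        by (rule DERIV_cmult)
    qed
    have sumd: "(\<Sum>j<n. d j) = 0"
      unfolding d_def using s t by (simp add: sum_subtractf)
    have dN: "(N has_real_derivative 0) (at 0)"
    proof -
      have "(N has_real_derivative (\<Sum>j<n. p * (1 + 0 * d j) powr (p - of_nat 1) * d j)) (at 0)"
        unfolding N_def
        by (rule DERIV_sum, rule DERIV_fun_powr) (auto intro!: derivative_eq_intros)
      moreover have "(\<Sum>j<n. p * (1 + 0 * d j) powr (p - of_nat 1) * d j) = p * (\<Sum>j<n. d j)"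
        by (simp add: sum_distrib_left)
      ultimately show ?thesis using sumd by simp
    qed
    have N0: "N 0 = real n" unfolding N_def by simp
    have dh: "(h has_real_derivative (Q' * N 0 powr c + (c * N 0 powr (c - of_nat 1) * 0) * Q 0)) (at 0)"
      unfolding h_def
      by (rule DERIV_mult[OF dQ], rule DERIV_fun_powr[OF dN]) (use N0 n0 in simp)
    have Q0: "Q 0 = msum r n A" unfolding Q_def msum_def by simp
    have h0: "\<bar>h 0\<bar> = eta p r n A"
      using assms(3) unfolding h_def Q0 N0 c_def by (simp add: abs_mult mult.commute)
    have bound: "\<bar>h e\<bar> \<le> \<bar>h 0\<bar>" if e: "\<bar>0 - e\<bar> < 1/2" for e
    proof -
      define y where "y = (\<lambda>j. 1 + e * d j)"
      have ypos: "y j > 0" for j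
      proof -
        have "\<bar>d j\<bar> \<le> 1" unfolding d_def by auto
        then have "\<bar>e * d j\<bar> \<le> \<bar>e\<bar>" by (simp add: abs_mult mult_left_le)
        then show ?thesis unfolding y_def using e by linarith
      qed
      have Npos: "N e > 0" unfolding N_def
        using ypos n0 by (intro sum_pos) (auto simp: y_def, metis less_irrefl)
      have pn: "pnorm p n y = N e powr (1/p)"
        unfolding pnorm_def N_def using ypos by (simp add: y_def abs_of_pos)
      have "\<bar>polyA r n A y\<bar> \<le> eta p r n A * pnorm p n y ^ r"
        by (rule poly_bound[OF p0]) (use pn Npos in simp)
      moreover have "polyA r n A y = Q e" unfolding polyA_def Q_def y_def by simp
      moreover have "pnorm p n y ^ r = N e powr (real r / p)"
        unfolding pn using Npos by (simp add: powr_power)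
      ultimately have Qb: "\<bar>Q e\<bar> \<le> eta p r n A * N e powr (real r / p)" by simp
      have inv: "N e powr c = inverse (N e powr (real r / p))"
        unfolding c_def by (simp add: powr_minus)
      have Mpos: "N e powr (real r / p) > 0" using Npos by simp
      have le1: "\<bar>Q e\<bar> / N e powr (real r / p) \<le> eta p r n A"
        by (subst pos_divide_le_eq[OF Mpos]) (rule Qb)
      have eq1: "\<bar>Q e\<bar> * N e powr c = \<bar>Q e\<bar> / N e powr (real r / p)"
        by (simp only: inv divide_inverse)
      have "\<bar>Q e\<bar> * N e powr c \<le> eta p r n A"
        using le1 eq1 by linarith
      moreover have "\<bar>h e\<bar> = \<bar>Q e\<bar> * N e powr c"
        unfolding h_def abs_mult using Npos by simp
      ultimately show ?thesis using h0 by linarith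
    qed
    have "Q' * N 0 powr c + (c * N 0 powr (c - of_nat 1) * 0) * Q 0 = 0"
    proof (cases "h 0 \<ge> 0")
      case True
      have "\<forall>y. \<bar>0 - y\<bar> < 1/2 \<longrightarrow> h y \<le> h 0"
      proof (intro allI impI)
        fix y assume "\<bar>0 - y\<bar> < (1::real)/2"
        from bound[OF this] True abs_ge_self[of "h y"] show "h y \<le> h 0" by linarith
      qed
      then show ?thesis
        by (intro DERIV_local_max[OF dh, of "1/2"]) auto
    next
      case False
      have "\<forall>y. \<bar>0 - y\<bar> < 1/2 \<longrightarrow> h 0 \<le> h y"
      proof (intro allI impI)
        fix y assume "\<bar>0 - y\<bar> < (1::real)/2"
        from bound[OF this] False show "h 0 \<le> h y" by linarith
      qed
      then show ?thesis
        by (intro DERIV_local_min[OF dh, of "1/2"]) auto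
    qed
    then have "Q' = 0" using N0 n0 by simp
    moreover have "Q' = (\<Sum>k<r. slice_sum r n A k s - slice_sum r n A k t)"
    proof -
      have "Q' = (\<Sum>i\<in>idx r n. \<Sum>k<r. A i * d (i k))"
        unfolding Q'_def by (simp add: sum_distrib_left)
      also have "\<dots> = (\<Sum>k<r. \<Sum>i\<in>idx r n. A i * d (i k))"
        by (rule sum.swap)
      also have "\<dots> = (\<Sum>k<r. slice_sum r n A k s - slice_sum r n A k t)"
      proof (rule sum.cong[OF refl])
        fix k
        show "(\<Sum>i\<in>idx r n. A i * d (i k)) = slice_sum r n A k s - slice_sum r n A k t"
          unfolding slice_ind d_def right_diff_distrib sum_subtractf ..
      qed
      finally show ?thesis .
    qed
    moreover have "(\<Sum>k<r. slice_sum r n A k s - slice_sum r n A k t)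
        = real r * (slice_sum r n A 0 s - slice_sum r n A 0 t)"
    proof -
      have "(\<Sum>k<r. slice_sum r n A k s - slice_sum r n A k t)
          = (\<Sum>k<r. slice_sum r n A 0 s - slice_sum r n A 0 t)"
        by (rule sum.cong[OF refl]) (metis lessThan_iff slice_sym[OF assms(1)])
      then show ?thesis by simp
    qed
    ultimately show ?thesis using r0 by simp
  qed
  show ?thesis
    unfolding regular_matrix_def
  proof (intro allI impI)
    fix k s t assume k: "k < r" and s: "s < n" and t: "t < n"
    show "slice_sum r n A k s = slice_sum r n A k t"
    proof (cases "s = t")
      case False
      then show ?thesis using main[OF _ s t False] k slice_sym[OF assms(1) k] by simp
    qed simp
  qed
qed

end
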